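(* Let $n\geq2$ be finite and $\mathfrak A\in SA_n$. Then the canonical extension $\mathfrak A^+$ of $\mathfrak A$ is completely representable.
   Context: $SA_n=\mathbf{Mod}(\Sigma'_n)$, where $\Sigma'_n$ (signature $\wedge,-,s^i_j,s_{ij}$, $i\neq j<n$) consists of the Boolean axioms, equations saying each $s^i_j,s_{ij}$ is a Boolean endomorphism, and $t_1(x)=t_2(x)$ for all words $t_1,t_2$ with the same associated map in ${}^nn$ (words map to compositions of the transpositions $[i,j]$ and replacements $[i/j]$, where $[i/j]$ sends $i$ to $j$ and fixes the rest). The canonical extension $\mathfrak A^+$ is the complex algebra of the ultrafilter frame of $\mathfrak A$: universe $\mathcal P(\mathrm{Uf}\mathfrak A)$, and for each unary operator $f$, $f^+(Y)=\{u\in\mathrm{Uf}\mathfrak A:\exists w\in Y\ \forall b\in w\ f(b)\in u\}$. $\mathfrak B$ is completely representable if there is an injective homomorphism $g:\mathfrak B\to\wp(D)$ with $D$ dipermutable (closed under $s\mapsto s\circ[i/j]$ and $s\mapsto s\circ[i,j]$) and $g(\prod Y)=\bigcap g[Y]$ whenever $\prod Y$ exists; $\wp(D)$ carries $\cap$, complement relative to $D$, $S^i_j(X)=\{q\in D:q\circ[i/j]\in X\}$, $S_{ij}(X)=\{q\in D:q\circ[i,j]\in X\}$. *)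

theory Defs
  imports Main "HOL-Library.FuncSet"
begin

record 'a sa_alg =
  sa_carrier :: "'a set"
  sa_meet :: "'a \<Rightarrow> 'a \<Rightarrow> 'a"
  sa_cmp :: "'a \<Rightarrow> 'a"
  sa_sub :: "nat \<Rightarrow> nat \<Rightarrow> 'a \<Rightarrow> 'a"
  sa_swp :: "nat \<Rightarrow> nat \<Rightarrow> 'a \<Rightarrow> 'a"

definition sa_join :: "'a sa_alg \<Rightarrow> 'a \<Rightarrow> 'a \<Rightarrow> 'a" where
  "sa_join A x y = sa_cmp A (sa_meet A (sa_cmp A x) (sa_cmp A y))"

definition sa_le :: "'a sa_alg \<Rightarrow> 'a \<Rightarrow> 'a \<Rightarrow> bool" where
  "sa_le A x y \<longleftrightarrow> sa_meet A x y = x"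

definition boolean_alg :: "'a sa_alg \<Rightarrow> bool" where
  "boolean_alg A \<longleftrightarrow>
     sa_carrier A \<noteq> {} \<and>
     (\<forall>x\<in>sa_carrier A. \<forall>y\<in>sa_carrier A. sa_meet A x y \<in> sa_carrier A) \<and>
     (\<forall>x\<in>sa_carrier A. sa_cmp A x \<in> sa_carrier A) \<and>
     (\<forall>x\<in>sa_carrier A. \<forall>y\<in>sa_carrier A. sa_meet A x y = sa_meet A y x) \<and>
     (\<forall>x\<in>sa_carrier A. \<forall>y\<in>sa_carrier A. sa_join A x y = sa_join A y x) \<and>
     (\<forall>x\<in>sa_carrier A. \<forall>y\<in>sa_carrier A. \<forall>z\<in>sa_carrier A.
        sa_meet A (sa_meet A x y) z = sa_meet A x (sa_meet A y z)) \<and>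
     (\<forall>x\<in>sa_carrier A. \<forall>y\<in>sa_carrier A. \<forall>z\<in>sa_carrier A.
        sa_join A (sa_join A x y) z = sa_join A x (sa_join A y z)) \<and>
     (\<forall>x\<in>sa_carrier A. \<forall>y\<in>sa_carrier A. sa_meet A x (sa_join A x y) = x) \<and>
     (\<forall>x\<in>sa_carrier A. \<forall>y\<in>sa_carrier A. sa_join A x (sa_meet A x y) = x) \<and>
     (\<forall>x\<in>sa_carrier A. \<forall>y\<in>sa_carrier A. \<forall>z\<in>sa_carrier A.
        sa_meet A x (sa_join A y z) = sa_join A (sa_meet A x y) (sa_meet A x z)) \<and>
     (\<forall>x\<in>sa_carrier A. \<forall>y\<in>sa_carrier A.
        sa_meet A x (sa_cmp A x) = sa_meet A y (sa_cmp A y)) \<and>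
     (\<forall>x\<in>sa_carrier A. \<forall>y\<in>sa_carrier A.
        sa_join A x (sa_cmp A x) = sa_join A y (sa_cmp A y))"

definition bool_endo :: "'a sa_alg \<Rightarrow> ('a \<Rightarrow> 'a) \<Rightarrow> bool" where
  "bool_endo A f \<longleftrightarrow>
     (\<forall>x\<in>sa_carrier A. f x \<in> sa_carrier A) \<and>
     (\<forall>x\<in>sa_carrier A. \<forall>y\<in>sa_carrier A. f (sa_meet A x y) = sa_meet A (f x) (f y)) \<and>
     (\<forall>x\<in>sa_carrier A. f (sa_cmp A x) = sa_cmp A (f x))"

datatype sa_letter = Sub nat nat | Swp nat nat

definition repl :: "nat \<Rightarrow> nat \<Rightarrow> nat \<Rightarrow> nat" where
  "repl i j = (\<lambda>k. if k = i then j else k)"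

definition transp :: "nat \<Rightarrow> nat \<Rightarrow> nat \<Rightarrow> nat" where
  "transp i j = (\<lambda>k. if k = i then j else if k = j then i else k)"

fun letter_map :: "sa_letter \<Rightarrow> nat \<Rightarrow> nat" where
  "letter_map (Sub i j) = repl i j"
| "letter_map (Swp i j) = transp i j"

fun letter_ok :: "nat \<Rightarrow> sa_letter \<Rightarrow> bool" where
  "letter_ok n (Sub i j) \<longleftrightarrow> i < n \<and> j < n \<and> i \<noteq> j"
| "letter_ok n (Swp i j) \<longleftrightarrow> i < n \<and> j < n \<and> i \<noteq> j"

text \<open>The word [l1, ..., lk] denotes the term l1(l2(...(lk x))); its associated map is
  the composition [l1] o ... o [lk] (matching the set-algebra semantics
  S(X) = {q. q o tau \<in> X}).\<close>
definition word_map :: "sa_letter list \<Rightarrow> nat \<Rightarrow> nat" where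
  "word_map w = foldr (\<lambda>l f. letter_map l \<circ> f) w id"

fun letter_op :: "'a sa_alg \<Rightarrow> sa_letter \<Rightarrow> 'a \<Rightarrow> 'a" where
  "letter_op A (Sub i j) = sa_sub A i j"
| "letter_op A (Swp i j) = sa_swp A i j"

definition word_eval :: "'a sa_alg \<Rightarrow> sa_letter list \<Rightarrow> 'a \<Rightarrow> 'a" where
  "word_eval A w x = foldr (\<lambda>l y. letter_op A l y) w x"

definition SA :: "nat \<Rightarrow> 'a sa_alg set" where
  "SA n = {A. boolean_alg A \<and>
     (\<forall>i j. i < n \<longrightarrow> j < n \<longrightarrow> i \<noteq> j \<longrightarrow>
        bool_endo A (sa_sub A i j) \<and> bool_endo A (sa_swp A i j)) \<and>
     (\<forall>w1 w2. (\<forall>l\<in>set w1. letter_ok n l) \<longrightarrow> (\<forall>l\<in>set w2. letter_ok n l) \<longrightarrow>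
        (\<forall>k<n. word_map w1 k = word_map w2 k) \<longrightarrow>
        (\<forall>x\<in>sa_carrier A. word_eval A w1 x = word_eval A w2 x))}"

definition is_filter :: "'a sa_alg \<Rightarrow> 'a set \<Rightarrow> bool" where
  "is_filter A F \<longleftrightarrow> F \<subseteq> sa_carrier A \<and> F \<noteq> {} \<and>
     (\<forall>x\<in>F. \<forall>y\<in>F. sa_meet A x y \<in> F) \<and>
     (\<forall>x\<in>F. \<forall>y\<in>sa_carrier A. sa_le A x y \<longrightarrow> y \<in> F)"

definition is_ultrafilter :: "'a sa_alg \<Rightarrow> 'a set \<Rightarrow> bool" where
  "is_ultrafilter A F \<longleftrightarrow> is_filter A F \<and> F \<noteq> sa_carrier A \<and>
     (\<forall>G. is_filter A G \<and> G \<noteq> sa_carrier A \<and> F \<subseteq> G \<longrightarrow> G = F)"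

definition Uf :: "'a sa_alg \<Rightarrow> 'a set set" where
  "Uf A = {F. is_ultrafilter A F}"

definition op_plus :: "'a sa_alg \<Rightarrow> ('a \<Rightarrow> 'a) \<Rightarrow> 'a set set \<Rightarrow> 'a set set" where
  "op_plus A f Y = {u \<in> Uf A. \<exists>w\<in>Y. \<forall>b\<in>w. f b \<in> u}"

definition canonical_ext :: "'a sa_alg \<Rightarrow> 'a set set sa_alg" where
  "canonical_ext A =
     \<lparr> sa_carrier = Pow (Uf A),
       sa_meet = (\<inter>),
       sa_cmp = (\<lambda>Y. Uf A - Y),
       sa_sub = (\<lambda>i j. op_plus A (sa_sub A i j)),
       sa_swp = (\<lambda>i j. op_plus A (sa_swp A i j)) \<rparr>"

definition dipermutable :: "nat \<Rightarrow> (nat \<Rightarrow> 'u) set \<Rightarrow> bool" where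
  "dipermutable n D \<longleftrightarrow> D \<subseteq> extensional {..<n} \<and>
     (\<forall>s\<in>D. \<forall>i j. i < n \<longrightarrow> j < n \<longrightarrow> i \<noteq> j \<longrightarrow>
        s \<circ> repl i j \<in> D \<and> s \<circ> transp i j \<in> D)"

definition is_inf :: "'b sa_alg \<Rightarrow> 'b set \<Rightarrow> 'b \<Rightarrow> bool" where
  "is_inf B Y x \<longleftrightarrow> x \<in> sa_carrier B \<and> (\<forall>y\<in>Y. sa_le B x y) \<and>
     (\<forall>z\<in>sa_carrier B. (\<forall>y\<in>Y. sa_le B z y) \<longrightarrow> sa_le B z x)"

definition complete_representation ::
  "nat \<Rightarrow> 'b sa_alg \<Rightarrow> (nat \<Rightarrow> 'u) set \<Rightarrow> ('b \<Rightarrow> (nat \<Rightarrow> 'u) set) \<Rightarrow> bool" where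
  "complete_representation n B D g \<longleftrightarrow>
     dipermutable n D \<and>
     inj_on g (sa_carrier B) \<and>
     (\<forall>x\<in>sa_carrier B. g x \<subseteq> D) \<and>
     (\<forall>x\<in>sa_carrier B. \<forall>y\<in>sa_carrier B. g (sa_meet B x y) = g x \<inter> g y) \<and>
     (\<forall>x\<in>sa_carrier B. g (sa_cmp B x) = D - g x) \<and>
     (\<forall>i j. i < n \<longrightarrow> j < n \<longrightarrow> i \<noteq> j \<longrightarrow> (\<forall>x\<in>sa_carrier B.
        g (sa_sub B i j x) = {q\<in>D. q \<circ> repl i j \<in> g x} \<and>
        g (sa_swp B i j x) = {q\<in>D. q \<circ> transp i j \<in> g x})) \<and>
     (\<forall>Y x. Y \<subseteq> sa_carrier B \<longrightarrow> is_inf B Y x \<longrightarrow> g x = D \<inter> (\<Inter>y\<in>Y. g y))"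

end

theory Submission
  imports Defs
begin


locale ba =
  fixes A :: "'a sa_alg"
  assumes B: "boolean_alg A"
begin

abbreviation "C \<equiv> sa_carrier A"
abbreviation "m \<equiv> sa_meet A"
abbreviation "c \<equiv> sa_cmp A"
abbreviation "j \<equiv> sa_join A"

lemmas ax = B[unfolded boolean_alg_def]

lemma ne: "C \<noteq> {}" using B unfolding boolean_alg_def by auto
lemma clm[simp]: "x \<in> C \<Longrightarrow> y \<in> C \<Longrightarrow> m x y \<in> C" using B unfolding boolean_alg_def by auto
lemma clc[simp]: "x \<in> C \<Longrightarrow> c x \<in> C" using B unfolding boolean_alg_def by auto
lemma clj[simp]: "x \<in> C \<Longrightarrow> y \<in> C \<Longrightarrow> j x y \<in> C" unfolding sa_join_def by simp
lemma comm: assumes "x \<in> C" "y \<in> C" shows "m x y = m y x"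
proof -
  have H: "\<forall>x\<in>C. \<forall>y\<in>C. m x y = m y x" by (fact ax[THEN conjunct2, THEN conjunct2, THEN conjunct2, THEN conjunct1])
  show ?thesis by (rule bspec[OF bspec[OF H assms(1)] assms(2)])
qed
lemma assoc: "x \<in> C \<Longrightarrow> y \<in> C \<Longrightarrow> z \<in> C \<Longrightarrow> m (m x y) z = m x (m y z)"
  using ax[THEN conjunct2, THEN conjunct2, THEN conjunct2, THEN conjunct2, THEN conjunct2, THEN conjunct1] by blast
lemma abs1: "x \<in> C \<Longrightarrow> y \<in> C \<Longrightarrow> m x (j x y) = x" using ax[THEN conjunct2, THEN conjunct2, THEN conjunct2, THEN conjunct2, THEN conjunct2, THEN conjunct2, THEN conjunct2, THEN conjunct1] by blast
lemma abs2: "x \<in> C \<Longrightarrow> y \<in> C \<Longrightarrow> j x (m x y) = x" using ax[THEN conjunct2, THEN conjunct2, THEN conjunct2, THEN conjunct2, THEN conjunct2, THEN conjunct2, THEN conjunct2, THEN conjunct2, THEN conjunct1] by blast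
lemma dist: "x \<in> C \<Longrightarrow> y \<in> C \<Longrightarrow> z \<in> C \<Longrightarrow> m x (j y z) = j (m x y) (m x z)"
  using ax[THEN conjunct2, THEN conjunct2, THEN conjunct2, THEN conjunct2, THEN conjunct2, THEN conjunct2, THEN conjunct2, THEN conjunct2, THEN conjunct2, THEN conjunct1] by blast
lemma zero: "x \<in> C \<Longrightarrow> y \<in> C \<Longrightarrow> m x (c x) = m y (c y)" using ax[THEN conjunct2, THEN conjunct2, THEN conjunct2, THEN conjunct2, THEN conjunct2, THEN conjunct2, THEN conjunct2, THEN conjunct2, THEN conjunct2, THEN conjunct2, THEN conjunct1] by blast
lemma one: "x \<in> C \<Longrightarrow> y \<in> C \<Longrightarrow> j x (c x) = j y (c y)" using ax[THEN conjunct2, THEN conjunct2, THEN conjunct2, THEN conjunct2, THEN conjunct2, THEN conjunct2, THEN conjunct2, THEN conjunct2, THEN conjunct2, THEN conjunct2, THEN conjunct2] by blast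

lemma idem: "x \<in> C \<Longrightarrow> m x x = x"
proof -
  assume x: "x \<in> C"
  have "j x (m x x) = x" using abs2 x by simp
  hence "m x (j x (m x x)) = m x x" by simp
  thus ?thesis using abs1[of x "m x x"] x by simp
qed

lemma jidem: "x \<in> C \<Longrightarrow> j x x = x"
  using abs2[of x x] idem by simp

lemma zero_le: "x \<in> C \<Longrightarrow> y \<in> C \<Longrightarrow> m (m x (c x)) y = m x (c x)"
proof -
  assume x: "x \<in> C" and y: "y \<in> C"
  have "m (m y (c y)) y = m y (m y (c y))" using y comm by simp
  also have "\<dots> = m (m y y) (c y)" using y assoc by simp
  also have "\<dots> = m y (c y)" using y idem by simp
  finally show ?thesis using zero[OF x y] by simp
qed

lemma le_zero: "p \<in> C \<Longrightarrow> x \<in> C \<Longrightarrow> m p x = p \<Longrightarrow> m p (c x) = p \<Longrightarrow> p = m x (c x)"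
proof -
  assume p: "p \<in> C" and x: "x \<in> C" and h1: "m p x = p" and h2: "m p (c x) = p"
  have "m p (m x (c x)) = p" using assoc[of p x "c x"] p x h1 h2 by simp
  moreover have "m (m x (c x)) p = m x (c x)" using zero_le x p by simp
  ultimately show ?thesis using comm[of p "m x (c x)"] p x by simp
qed

lemma filter_zero: "is_filter A F \<Longrightarrow> x \<in> C \<Longrightarrow> m x (c x) \<in> F \<Longrightarrow> F = C"
  unfolding is_filter_def sa_le_def using zero_le by blast

lemma uf_nzero: "is_ultrafilter A u \<Longrightarrow> x \<in> C \<Longrightarrow> m x (c x) \<notin> u"
  unfolding is_ultrafilter_def using filter_zero by blast

lemma swap: "p \<in> C \<Longrightarrow> q \<in> C \<Longrightarrow> r \<in> C \<Longrightarrow> s \<in> C \<Longrightarrow>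
  m (m p q) (m r s) = m (m p r) (m q s)"
proof -
  assume h: "p \<in> C" "q \<in> C" "r \<in> C" "s \<in> C"
  have "m (m p q) (m r s) = m p (m q (m r s))" using h assoc[of p q "m r s"] by simp
  also have "\<dots> = m p (m (m q r) s)" using h assoc[of q r s] by simp
  also have "\<dots> = m p (m (m r q) s)" using h comm[of q r] by simp
  also have "\<dots> = m p (m r (m q s))" using h assoc[of r q s] by simp
  also have "\<dots> = m (m p r) (m q s)" using h assoc[of p r "m q s"] by simp
  finally show ?thesis .
qed

lemma mono2: "p \<in> C \<Longrightarrow> q \<in> C \<Longrightarrow> z1 \<in> C \<Longrightarrow> z2 \<in> C \<Longrightarrow> m p z1 = p \<Longrightarrow> m q z2 = q \<Longrightarrow>
  m (m p q) (m z1 z2) = m p q"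
  using swap[of p q z1 z2] by simp

definition G :: "'a set \<Rightarrow> 'a \<Rightarrow> 'a set" where
  "G u y = {z\<in>C. \<exists>a\<in>u. m (m a y) z = m a y}"

lemma G_filter:
  assumes F: "is_filter A u" and y: "y \<in> C"
  shows "is_filter A (G u y)" "u \<subseteq> G u y" "y \<in> G u y"
proof -
  have uC: "u \<subseteq> C" using F unfolding is_filter_def by blast
  obtain a0 where a0: "a0 \<in> u" using F unfolding is_filter_def by blast
  have mcl: "\<And>a b. a \<in> u \<Longrightarrow> b \<in> u \<Longrightarrow> m a b \<in> u" using F unfolding is_filter_def by blast
  show "y \<in> G u y"
  proof -
    have a0C: "a0 \<in> C" using a0 uC by blast
    have "m (m a0 y) y = m a0 y" using assoc[of a0 y y] idem[of y] a0C y by simp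
    thus ?thesis unfolding G_def using a0 y by blast
  qed
  show "u \<subseteq> G u y"
  proof
    fix a assume a: "a \<in> u"
    hence aC: "a \<in> C" using uC by blast
    have "m (m a y) a = m a (m y a)" using aC y assoc by simp
    also have "\<dots> = m a (m a y)" using aC y comm[of y a] by simp
    also have "\<dots> = m a y" using aC y assoc[of a a y] idem by simp
    finally have "m (m a y) a = m a y" .
    thus "a \<in> G u y" unfolding G_def using a aC by blast
  qed
  show "is_filter A (G u y)"
    unfolding is_filter_def
  proof (intro conjI ballI impI)
    show "G u y \<subseteq> C" unfolding G_def by blast
    show "G u y \<noteq> {}" using \<open>y \<in> G u y\<close> by blast
  next
    fix z1 z2 assume z1: "z1 \<in> G u y" and z2: "z2 \<in> G u y"
    then obtain a1 a2 where a1: "a1 \<in> u" "m (m a1 y) z1 = m a1 y" and a2: "a2 \<in> u" "m (m a2 y) z2 = m a2 y"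
      and zC: "z1 \<in> C" "z2 \<in> C" unfolding G_def by blast
    have aC: "a1 \<in> C" "a2 \<in> C" using a1 a2 uC by blast+
    have p: "m a1 y \<in> C" "m a2 y \<in> C" using aC y by simp_all
    have "m (m (m a1 y) (m a2 y)) (m z1 z2) = m (m a1 y) (m a2 y)"
      using mono2[OF p zC a1(2) a2(2)] .
    moreover have "m (m a1 y) (m a2 y) = m (m a1 a2) y"
      using swap[of a1 y a2 y] aC y idem by simp
    ultimately have "m (m (m a1 a2) y) (m z1 z2) = m (m a1 a2) y" by simp
    thus "m z1 z2 \<in> G u y" unfolding G_def using mcl[OF a1(1) a2(1)] zC by auto
  next
    fix z1 z2 assume z1: "z1 \<in> G u y" and z2: "z2 \<in> C" and le: "sa_le A z1 z2"
    then obtain a1 where a1: "a1 \<in> u" "m (m a1 y) z1 = m a1 y" and zC: "z1 \<in> C"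
      unfolding G_def by blast
    have aC: "a1 \<in> C" using a1 uC by blast
    have "m (m a1 y) z2 = m (m (m a1 y) z1) z2" using a1 by simp
    also have "\<dots> = m (m a1 y) (m z1 z2)" using aC y zC z2 by (simp add: assoc)
    also have "\<dots> = m a1 y" using le a1 unfolding sa_le_def by simp
    finally show "z2 \<in> G u y" unfolding G_def using a1 z2 by blast
  qed
qed

lemma uf_prime:
  assumes U: "is_ultrafilter A u" and x: "x \<in> C" and nx: "x \<notin> u"
  shows "c x \<in> u"
proof (rule ccontr)
  assume ncx: "c x \<notin> u"
  have UU: "is_filter A u \<and> u \<noteq> C \<and> (\<forall>G. is_filter A G \<and> G \<noteq> C \<and> u \<subseteq> G \<longrightarrow> G = u)"
    using U unfolding is_ultrafilter_def .
  have F: "is_filter A u" using UU by (rule conjunct1)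
  have uC: "u \<subseteq> C" using F unfolding is_filter_def by (rule conjunct1)
  have max: "\<And>G'. is_filter A G' \<Longrightarrow> G' \<noteq> C \<Longrightarrow> u \<subseteq> G' \<Longrightarrow> G' = u"
    using UU by blast
  have GC: "\<And>y. y \<in> C \<Longrightarrow> y \<notin> u \<Longrightarrow> G u y = C"
    using G_filter[OF F] max by blast
  have "c x \<in> G u x" using GC[OF x nx] x by simp
  then obtain a where a: "a \<in> u" "m (m a x) (c x) = m a x" unfolding G_def by blast
  have "c (c x) \<in> G u (c x)" using GC[OF clc[OF x] ncx] x by simp
  then obtain b where b: "b \<in> u" "m (m b (c x)) (c (c x)) = m b (c x)" unfolding G_def by blast
  have aC: "a \<in> C" and bC: "b \<in> C" using a b uC by blast+
  define z where "z = m x (c x)"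
  have zC: "z \<in> C" using x z_def by simp
  have za: "m a x = z" unfolding z_def
    by (rule le_zero) (use aC x a in \<open>simp_all add: assoc idem\<close>)
  have zb: "m b (c x) = z" unfolding z_def
    using le_zero[of "m b (c x)" "c x"] bC x b zero[of x "c x"] by (simp add: assoc idem)
  define d where "d = m a b"
  have dC: "d \<in> C" using aC bC d_def by simp
  have du: "d \<in> u" using F a b unfolding is_filter_def d_def by blast
  have d1: "m d x = z"
  proof -
    have "m d x = m b (m a x)" unfolding d_def using aC bC x comm[of a b] assoc[of b a x] by simp
    also have "\<dots> = m b z" using za by simp
    also have "\<dots> = z" using comm[of b z] zero_le[of x b] bC x zC z_def by simp
    finally show ?thesis .
  qed
  have d2: "m d (c x) = z"
  proof -
    have "m d (c x) = m a (m b (c x))" unfolding d_def using aC bC x assoc[of a b "c x"] by simp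
    also have "\<dots> = m a z" using zb by simp
    also have "\<dots> = z" using comm[of a z] zero_le[of x a] aC x zC z_def by simp
    finally show ?thesis .
  qed
  have "d = m d (j d (c d))" using abs1 dC by simp
  also have "\<dots> = m d (j x (c x))" using one[of d x] dC x by simp
  also have "\<dots> = j z z" using dist dC x d1 d2 by simp
  also have "\<dots> = z" using jidem zC by simp
  finally have "z \<in> u" using du by simp
  thus False using uf_nzero[OF U x] z_def by simp
qed

end



context ba
begin

lemma endo_cl: "bool_endo A f \<Longrightarrow> x \<in> C \<Longrightarrow> f x \<in> C" unfolding bool_endo_def by blast
lemma endo_m: "bool_endo A f \<Longrightarrow> x \<in> C \<Longrightarrow> y \<in> C \<Longrightarrow> f (m x y) = m (f x) (f y)" unfolding bool_endo_def by blast
lemma endo_c: "bool_endo A f \<Longrightarrow> x \<in> C \<Longrightarrow> f (c x) = c (f x)" unfolding bool_endo_def by blast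

lemma uf_filter: "is_ultrafilter A u \<Longrightarrow> is_filter A u" unfolding is_ultrafilter_def by (rule conjunct1)
lemma uf_sub: "is_ultrafilter A u \<Longrightarrow> u \<subseteq> C" using uf_filter unfolding is_filter_def by blast

lemma preimage_uf:
  assumes f: "bool_endo A f" and U: "is_ultrafilter A u"
  shows "is_ultrafilter A {x\<in>C. f x \<in> u}" (is "is_ultrafilter A ?P")
proof -
  have F: "is_filter A u" using uf_filter[OF U] .
  have uC: "u \<subseteq> C" using uf_sub[OF U] .
  have umeet: "\<And>a b. a \<in> u \<Longrightarrow> b \<in> u \<Longrightarrow> m a b \<in> u" using F unfolding is_filter_def by blast
  have uup: "\<And>a b. a \<in> u \<Longrightarrow> b \<in> C \<Longrightarrow> m a b = a \<Longrightarrow> b \<in> u" using F unfolding is_filter_def sa_le_def by blast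
  obtain x0 where x0: "x0 \<in> C" using ne by blast
  have PF: "is_filter A ?P"
    unfolding is_filter_def
  proof (intro conjI ballI impI)
    show "?P \<subseteq> C" by blast
    show "?P \<noteq> {}"
    proof (cases "f x0 \<in> u")
      case True thus ?thesis using x0 by blast
    next
      case False
      hence "c (f x0) \<in> u" using uf_prime[OF U endo_cl[OF f x0]] by simp
      hence "c x0 \<in> ?P" using endo_c[OF f x0] x0 by simp
      thus ?thesis by blast
    qed
  next
    fix x y assume "x \<in> ?P" "y \<in> ?P"
    thus "m x y \<in> ?P" using endo_m[OF f] umeet by auto
  next
    fix x y assume x: "x \<in> ?P" and y: "y \<in> C" and le: "sa_le A x y"
    have "m (f x) (f y) = f x" using endo_m[OF f, of x y] le x y unfolding sa_le_def by simp
    thus "y \<in> ?P" using uup[of "f x" "f y"] x y endo_cl[OF f y] by simp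
  qed
  have PC: "?P \<noteq> C"
  proof
    assume "?P = C"
    hence "m x0 (c x0) \<in> ?P" using x0 by simp
    hence "m (f x0) (c (f x0)) \<in> u" using endo_m[OF f x0 clc[OF x0]] endo_c[OF f x0] by simp
    thus False using uf_nzero[OF U endo_cl[OF f x0]] by simp
  qed
  have PM: "\<forall>G. is_filter A G \<and> G \<noteq> C \<and> ?P \<subseteq> G \<longrightarrow> G = ?P"
  proof (intro allI impI)
    fix G assume H: "is_filter A G \<and> G \<noteq> C \<and> ?P \<subseteq> G"
    have GC: "G \<subseteq> C" using H unfolding is_filter_def by blast
    have "G \<subseteq> ?P"
    proof
      fix y assume yG: "y \<in> G"
      have y: "y \<in> C" using yG GC by blast
      show "y \<in> ?P"
      proof (rule ccontr)
        assume "y \<notin> ?P"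
        hence "f y \<notin> u" using y by blast
        hence "c (f y) \<in> u" using uf_prime[OF U endo_cl[OF f y]] by simp
        hence "c y \<in> ?P" using endo_c[OF f y] y by simp
        hence "c y \<in> G" using H by blast
        hence "m y (c y) \<in> G" using H yG unfolding is_filter_def by blast
        hence "G = C" using filter_zero[of G y] H y by blast
        thus False using H by blast
      qed
    qed
    thus "G = ?P" using H by blast
  qed
  show ?thesis unfolding is_ultrafilter_def using PF PC PM by blast
qed

lemma op_plus_iff:
  assumes f: "bool_endo A f" and U: "is_ultrafilter A P" and Y: "Y \<subseteq> Uf A"
  shows "P \<in> op_plus A f Y \<longleftrightarrow> {x\<in>C. f x \<in> P} \<in> Y"
proof
  assume h: "{x\<in>C. f x \<in> P} \<in> Y"
  have PU: "P \<in> Uf A" unfolding Uf_def using U by simp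
  have "\<exists>w\<in>Y. \<forall>b\<in>w. f b \<in> P" using h by (intro bexI[of _ "{x\<in>C. f x \<in> P}"]) simp_all
  thus "P \<in> op_plus A f Y" unfolding op_plus_def using PU by simp
next
  assume "P \<in> op_plus A f Y"
  hence "\<exists>w\<in>Y. \<forall>b\<in>w. f b \<in> P" unfolding op_plus_def by simp
  then obtain w where w: "w \<in> Y" "\<forall>b\<in>w. f b \<in> P" by blast
  have "w \<in> Uf A" using w(1) Y by (rule subsetD[rotated])
  hence wU: "is_ultrafilter A w" unfolding Uf_def by simp
  have Q: "is_ultrafilter A {x\<in>C. f x \<in> P}" using preimage_uf[OF f U] .
  have sub: "w \<subseteq> {x\<in>C. f x \<in> P}" using w(2) uf_sub[OF wU] by blast
  have wmax: "\<forall>G. is_filter A G \<and> G \<noteq> C \<and> w \<subseteq> G \<longrightarrow> G = w"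
    using wU[unfolded is_ultrafilter_def] by (rule conjunct2[THEN conjunct2])
  have q1: "is_filter A {x\<in>C. f x \<in> P}" using Q[unfolded is_ultrafilter_def] by (rule conjunct1)
  have q2: "{x\<in>C. f x \<in> P} \<noteq> C" using Q[unfolded is_ultrafilter_def] by (rule conjunct2[THEN conjunct1])
  have "{x\<in>C. f x \<in> P} = w" using wmax[rule_format, OF conjI[OF q1 conjI[OF q2 sub]]] .
  thus "{x\<in>C. f x \<in> P} \<in> Y" using w by simp
qed

end

lemma SA_D:
  assumes "A \<in> SA n"
  shows "boolean_alg A"
    "\<And>i j. i < n \<Longrightarrow> j < n \<Longrightarrow> i \<noteq> j \<Longrightarrow> bool_endo A (sa_sub A i j)"
    "\<And>i j. i < n \<Longrightarrow> j < n \<Longrightarrow> i \<noteq> j \<Longrightarrow> bool_endo A (sa_swp A i j)"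
    "\<And>w1 w2 x. (\<forall>l\<in>set w1. letter_ok n l) \<Longrightarrow> (\<forall>l\<in>set w2. letter_ok n l) \<Longrightarrow>
        (\<forall>k<n. word_map w1 k = word_map w2 k) \<Longrightarrow> x \<in> sa_carrier A \<Longrightarrow> word_eval A w1 x = word_eval A w2 x"
  using assms unfolding SA_def by blast+

lemma endo_id: "bool_endo A id" unfolding bool_endo_def by simp

lemma endo_comp: "bool_endo A f \<Longrightarrow> bool_endo A g \<Longrightarrow> bool_endo A (f \<circ> g)"
  unfolding bool_endo_def by simp

lemma word_eval_Nil[simp]: "word_eval A [] x = x" unfolding word_eval_def by simp
lemma word_eval_Cons: "word_eval A (l # w) = letter_op A l \<circ> word_eval A w"
  unfolding word_eval_def by auto
lemma word_eval_snoc: "word_eval A (w @ [l]) x = word_eval A w (letter_op A l x)"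
  unfolding word_eval_def by simp

lemma letter_endo: "A \<in> SA n \<Longrightarrow> letter_ok n l \<Longrightarrow> bool_endo A (letter_op A l)"
  by (cases l) (simp_all add: SA_D(2) SA_D(3))

lemma word_endo: "A \<in> SA n \<Longrightarrow> \<forall>l\<in>set w. letter_ok n l \<Longrightarrow> bool_endo A (word_eval A w)"
proof (induction w)
  case Nil
  have "word_eval A [] = id" by (rule ext) simp
  thus ?case using endo_id[of A] by (simp add: id_def)
next
  case (Cons l w)
  have "letter_ok n l" using Cons.prems(2) by simp
  hence e1: "bool_endo A (letter_op A l)" using letter_endo[of A n l] Cons.prems(1) by blast
  have e2: "bool_endo A (word_eval A w)" using Cons by simp
  show ?case unfolding word_eval_Cons using endo_comp[OF e1 e2] .
qed

lemma foldr_comp: "foldr (\<lambda>l f. letter_map l \<circ> f) w g = word_map w \<circ> g"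
proof (induction w)
  case Nil thus ?case by (simp add: word_map_def)
next
  case (Cons a w)
  have "foldr (\<lambda>l f. letter_map l \<circ> f) (a # w) g = letter_map a \<circ> foldr (\<lambda>l f. letter_map l \<circ> f) w g"
    by (simp only: foldr.simps o_apply)
  also have "\<dots> = letter_map a \<circ> (word_map w \<circ> g)" by (simp only: Cons.IH)
  also have "\<dots> = (letter_map a \<circ> word_map w) \<circ> g" by (simp add: comp_assoc)
  also have "letter_map a \<circ> word_map w = word_map (a # w)" by (simp add: word_map_def)
  finally show ?case .
qed

lemma word_map_snoc: "word_map (w @ [l]) = word_map w \<circ> letter_map l"
proof -
  have "word_map (w @ [l]) = foldr (\<lambda>l f. letter_map l \<circ> f) w (letter_map l)"
    by (simp add: word_map_def)
  thus ?thesis by (simp add: foldr_comp)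
qed



definition qf :: "nat \<Rightarrow> 'b \<Rightarrow> sa_letter list \<Rightarrow> nat \<Rightarrow> 'b set \<times> nat" where
  "qf n u w = (\<lambda>k. if k < n then ({u}, word_map w k) else undefined)"

definition okw :: "nat \<Rightarrow> sa_letter list set" where
  "okw n = {w. \<forall>l\<in>set w. letter_ok n l}"

lemma qf_eq: "qf n u w1 = qf n u' w2 \<Longrightarrow> k < n \<Longrightarrow> word_map w1 k = word_map w2 k \<and> u = u'"
  unfolding qf_def by (drule fun_cong[of _ _ k]) simp

lemma letter_map_lt: "letter_ok n l \<Longrightarrow> k < n \<Longrightarrow> letter_map l k < n"
  by (cases l) (auto simp: repl_def transp_def)

lemma letter_map_ge: "letter_ok n l \<Longrightarrow> \<not> k < n \<Longrightarrow> letter_map l k = k"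
  by (cases l) (auto simp: repl_def transp_def)

lemma qf_comp: "letter_ok n l \<Longrightarrow> qf n u w \<circ> letter_map l = qf n u (w @ [l])"
proof (rule ext)
  fix k assume l: "letter_ok n l"
  show "(qf n u w \<circ> letter_map l) k = qf n u (w @ [l]) k"
  proof (cases "k < n")
    case True thus ?thesis using letter_map_lt[OF l True] by (simp add: qf_def word_map_snoc)
  next
    case False thus ?thesis using letter_map_ge[OF l False] by (simp add: qf_def)
  qed
qed

theorem theorem4p17:
  fixes n :: nat and A :: "'a sa_alg"
  assumes "2 \<le> n" and "A \<in> SA n"
  shows "\<exists>(D :: (nat \<Rightarrow> 'a set set \<times> nat) set) g.
           complete_representation n (canonical_ext A) D g"
proof -
  note SA = assms(2)
  have n0: "0 < n" using assms(1) by simp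
  have BA: "boolean_alg A" using SA_D(1)[OF SA] .
  interpret ba A by (rule ba.intro[OF BA])
  define D :: "(nat \<Rightarrow> 'a set set \<times> nat) set" where
    "D = {qf n u w | u w. u \<in> Uf A \<and> w \<in> okw n}"
  define hh :: "(nat \<Rightarrow> 'a set set \<times> nat) \<Rightarrow> 'a set" where
    "hh q = {x\<in>C. word_eval A (SOME w. w \<in> okw n \<and> q = qf n (the_elem (fst (q 0))) w) x \<in> the_elem (fst (q 0))}" for q
  define g where "g Y = {q\<in>D. hh q \<in> Y}" for Y
  have hh_qf: "hh (qf n u w) = {x\<in>C. word_eval A w x \<in> u}" if u: "u \<in> Uf A" and w: "w \<in> okw n" for u w
  proof -
    have f0: "the_elem (fst (qf n u w 0)) = u" using n0 by (simp add: qf_def)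
    define w' where "w' = (SOME w'. w' \<in> okw n \<and> qf n u w = qf n u w')"
    have "w' \<in> okw n \<and> qf n u w = qf n u w'" unfolding w'_def
      by (rule someI[where P="\<lambda>w'. w' \<in> okw n \<and> qf n u w = qf n u w'" and x=w]) (simp add: w)
    hence w': "w' \<in> okw n" "qf n u w = qf n u w'" by blast+
    have "\<forall>k<n. word_map w' k = word_map w k" using qf_eq[OF w'(2)] by simp
    hence ev: "\<And>x. x \<in> C \<Longrightarrow> word_eval A w' x = word_eval A w x"
      using SA_D(4)[OF SA, of w' w] w' w unfolding okw_def by blast
    show ?thesis unfolding hh_def f0 w'_def[symmetric] using ev by auto
  qed
  have hh_uf: "hh q \<in> Uf A" if q: "q \<in> D" for q
  proof -
    obtain u w where uw: "q = qf n u w" "u \<in> Uf A" "w \<in> okw n" using q unfolding D_def by blast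
    have "is_ultrafilter A {x\<in>C. word_eval A w x \<in> u}"
      using preimage_uf[OF word_endo[OF SA] ] uw(2,3) unfolding okw_def Uf_def by blast
    thus ?thesis using hh_qf[OF uw(2,3)] uw(1) unfolding Uf_def by simp
  qed
  have comp: "qf n u w \<circ> letter_map l \<in> D" "hh (qf n u w \<circ> letter_map l) = {x\<in>C. word_eval A w (letter_op A l x) \<in> u}"
    if u: "u \<in> Uf A" and w: "w \<in> okw n" and l: "letter_ok n l" for u w l
  proof -
    have w2: "w @ [l] \<in> okw n" using w l unfolding okw_def by simp
    show "qf n u w \<circ> letter_map l \<in> D" unfolding qf_comp[OF l] D_def using u w2 by blast
    show "hh (qf n u w \<circ> letter_map l) = {x\<in>C. word_eval A w (letter_op A l x) \<in> u}"
      unfolding qf_comp[OF l] hh_qf[OF u w2] by (simp add: word_eval_snoc)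
  qed
  have opl: "g (op_plus A (letter_op A l) Y) = {q\<in>D. q \<circ> letter_map l \<in> g Y}"
    if l: "letter_ok n l" and Y: "Y \<subseteq> Uf A" for l Y
  proof (rule set_eqI, rule iffI)
    fix q assume "q \<in> g (op_plus A (letter_op A l) Y)"
    hence q: "q \<in> D" "hh q \<in> op_plus A (letter_op A l) Y" unfolding g_def by blast+
    obtain u w where uw: "q = qf n u w" "u \<in> Uf A" "w \<in> okw n" using q unfolding D_def by blast
    have P: "is_ultrafilter A (hh q)" using hh_uf[OF q(1)] unfolding Uf_def by simp
    have le: "bool_endo A (letter_op A l)" using letter_endo[OF SA l] .
    have "{x\<in>C. letter_op A l x \<in> hh q} \<in> Y" using q(2) op_plus_iff[OF le P Y] by simp
    moreover have "{x\<in>C. letter_op A l x \<in> hh q} = hh (q \<circ> letter_map l)"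
      using comp(2)[OF uw(2,3) l] hh_qf[OF uw(2,3)] uw(1) endo_cl[OF le] by auto
    ultimately show "q \<in> {q\<in>D. q \<circ> letter_map l \<in> g Y}" unfolding g_def using q(1) comp(1)[OF uw(2,3) l] uw(1) by simp
  next
    fix q assume "q \<in> {q\<in>D. q \<circ> letter_map l \<in> g Y}"
    hence q: "q \<in> D" "hh (q \<circ> letter_map l) \<in> Y" unfolding g_def by blast+
    obtain u w where uw: "q = qf n u w" "u \<in> Uf A" "w \<in> okw n" using q unfolding D_def by blast
    have P: "is_ultrafilter A (hh q)" using hh_uf[OF q(1)] unfolding Uf_def by simp
    have le: "bool_endo A (letter_op A l)" using letter_endo[OF SA l] .
    have "{x\<in>C. letter_op A l x \<in> hh q} = hh (q \<circ> letter_map l)"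
      using comp(2)[OF uw(2,3) l] hh_qf[OF uw(2,3)] uw(1) endo_cl[OF le] by auto
    hence "{x\<in>C. letter_op A l x \<in> hh q} \<in> Y" using q(2) by simp
    hence "hh q \<in> op_plus A (letter_op A l) Y" using op_plus_iff[OF le P Y] by simp
    thus "q \<in> g (op_plus A (letter_op A l) Y)" unfolding g_def using q(1) by simp
  qed
  have car: "sa_carrier (canonical_ext A) = Pow (Uf A)" by (simp add: canonical_ext_def)
  have dip: "dipermutable n D"
    unfolding dipermutable_def
  proof (intro conjI ballI allI impI)
    show "D \<subseteq> extensional {..<n}" unfolding D_def extensional_def qf_def by auto
  next
    fix s i j assume s: "s \<in> D" and ij: "i < n" "j < n" "i \<noteq> j"
    obtain u w where uw: "s = qf n u w" "u \<in> Uf A" "w \<in> okw n" using s unfolding D_def by blast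
    show "s \<circ> repl i j \<in> D" using comp(1)[OF uw(2,3), of "Sub i j"] ij uw(1) by simp
    show "s \<circ> transp i j \<in> D" using comp(1)[OF uw(2,3), of "Swp i j"] ij uw(1) by simp
  qed
  have inj: "inj_on g (Pow (Uf A))"
  proof (rule inj_onI)
    fix Y1 Y2 assume Y: "Y1 \<in> Pow (Uf A)" "Y2 \<in> Pow (Uf A)" and eq: "g Y1 = g Y2"
    have key: "u \<in> Z2" if "u \<in> Z1" "Z1 \<subseteq> Uf A" "g Z1 = g Z2" for u Z1 Z2
    proof -
      have u: "u \<in> Uf A" using that by blast
      have e: "[] \<in> okw n" unfolding okw_def by simp
      have hu: "hh (qf n u []) = u" using hh_qf[OF u e] uf_sub[of u] u unfolding Uf_def by auto
      have "qf n u [] \<in> D" unfolding D_def using u e by blast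
      hence "qf n u [] \<in> g Z1" unfolding g_def using hu that by simp
      hence "qf n u [] \<in> g Z2" using that by simp
      thus ?thesis unfolding g_def using hu by simp
    qed
    show "Y1 = Y2" using key Y eq by blast
  qed
  have rep: "complete_representation n (canonical_ext A) D g"
    unfolding complete_representation_def car
  proof (intro conjI ballI allI impI)
    show "dipermutable n D" by (fact dip)
    show "inj_on g (Pow (Uf A))" by (fact inj)
  next
    fix x assume "x \<in> Pow (Uf A)" thus "g x \<subseteq> D" unfolding g_def by blast
  next
    fix x y assume "x \<in> Pow (Uf A)" "y \<in> Pow (Uf A)"
    thus "g (sa_meet (canonical_ext A) x y) = g x \<inter> g y" unfolding g_def by (auto simp: canonical_ext_def)
  next
    fix x assume "x \<in> Pow (Uf A)"
    thus "g (sa_cmp (canonical_ext A) x) = D - g x" unfolding g_def using hh_uf by (auto simp: canonical_ext_def)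
  next
    fix i j x assume ij: "i < n" "j < n" "i \<noteq> j" and x: "x \<in> Pow (Uf A)"
    show "g (sa_sub (canonical_ext A) i j x) = {q \<in> D. q \<circ> repl i j \<in> g x}"
      using opl[of "Sub i j" x] ij x by (simp add: canonical_ext_def)
    show "g (sa_swp (canonical_ext A) i j x) = {q \<in> D. q \<circ> transp i j \<in> g x}"
      using opl[of "Swp i j" x] ij x by (simp add: canonical_ext_def)
  next
    fix Y x assume Y: "Y \<subseteq> Pow (Uf A)" and inf: "is_inf (canonical_ext A) Y x"
    have x: "x \<subseteq> Uf A" and xy: "\<And>y. y \<in> Y \<Longrightarrow> x \<subseteq> y"
      and xm: "\<And>z. z \<subseteq> Uf A \<Longrightarrow> (\<forall>y\<in>Y. z \<subseteq> y) \<Longrightarrow> z \<subseteq> x"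
    proof -
      have I: "x \<in> Pow (Uf A) \<and> (\<forall>y\<in>Y. x \<inter> y = x) \<and>
          (\<forall>z\<in>Pow (Uf A). (\<forall>y\<in>Y. z \<inter> y = z) \<longrightarrow> z \<inter> x = z)"
        using inf unfolding is_inf_def sa_le_def by (simp add: canonical_ext_def)
      show "x \<subseteq> Uf A" using I by blast
      show "\<And>y. y \<in> Y \<Longrightarrow> x \<subseteq> y" using I by blast
      show "\<And>z. z \<subseteq> Uf A \<Longrightarrow> (\<forall>y\<in>Y. z \<subseteq> y) \<Longrightarrow> z \<subseteq> x"
      proof -
        fix z assume z: "z \<subseteq> Uf A" "\<forall>y\<in>Y. z \<subseteq> y"
        have "\<forall>y\<in>Y. z \<inter> y = z" using z(2) by blast
        hence "z \<inter> x = z" using I z(1) by blast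
        thus "z \<subseteq> x" by blast
      qed
    qed
    show "g x = D \<inter> (\<Inter>y\<in>Y. g y)"
    proof
      show "g x \<subseteq> D \<inter> (\<Inter>y\<in>Y. g y)" unfolding g_def using xy by blast
    next
      show "D \<inter> (\<Inter>y\<in>Y. g y) \<subseteq> g x"
      proof
        fix q assume q: "q \<in> D \<inter> (\<Inter>y\<in>Y. g y)"
        hence qD: "q \<in> D" and qy: "\<forall>y\<in>Y. hh q \<in> y" unfolding g_def by blast+
        have "{hh q} \<subseteq> x" by (rule xm) (use hh_uf[OF qD] qy in auto)
        thus "q \<in> g x" using q unfolding g_def by blast
      qed
    qed
  qed
  show ?thesis using rep by blast
qed

end
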